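(* In the Standing Setting, with $c,d$ defined for a flag $(p,B)$ as below and $\lambda^*=\lambda/(r,\lambda)$, we have $\lambda^*=c+d-2$.
   Context: Standing Setting: $\mathcal{D}=(\Omega,\mathcal{B})$ is a non-trivial $2$-$(v,k,\lambda)$ design (every two distinct points in exactly $\lambda$ blocks, blocks of size $k$, $2<k<v$) with $b$ blocks and replication number $r$, satisfying $\lambda\ge (r,\lambda)^2$. $G\le\mathrm{Aut}(\mathcal{D})$ is flag-transitive (transitive on pairs $(p,B)$ with $p\in B\in\mathcal{B}$). Moreover $\Omega=\Delta\times\Delta$ with $|\Delta|=\omega\ge 5$ odd, so $v=\omega^2$, and $T\times T\trianglelefteq G\le T_0\wr \mathbb{Z}_2$ acting in product action (the $\mathbb{Z}_2$ interchanging the two coordinates), where $T_0\le\mathrm{Sym}(\Delta)$ is $2$-transitive with nonabelian simple socle $T$; $G$ has rank $3$ on $\Omega$. For a flag $(p,B)$ with $p=(\alpha,\beta)$, $c$ is the number of points of $B$ with first coordinate $\alpha$ and $d$ the number of points of $B$ with second coordinate $\beta$. *)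

theory Defs
  imports "HOL-Algebra.SimpleGroups" "HOL-Algebra.Bij" "HOL-Algebra.Generated_Groups"
begin

definition pgrp :: "'a set \<Rightarrow> ('a \<Rightarrow> 'a) set \<Rightarrow> ('a \<Rightarrow> 'a) monoid" where
  "pgrp S G = (BijGroup S)\<lparr>carrier := G\<rparr>"

definition minimal_normal :: "('g, 'b) monoid_scheme \<Rightarrow> 'g set \<Rightarrow> bool" where
  "minimal_normal H N \<longleftrightarrow> N \<lhd> H \<and> N \<noteq> {\<one>\<^bsub>H\<^esub>} \<and>
     (\<forall>M. M \<lhd> H \<and> M \<subseteq> N \<longrightarrow> M = {\<one>\<^bsub>H\<^esub>} \<or> M = N)"

definition socle :: "('g, 'b) monoid_scheme \<Rightarrow> 'g set" where
  "socle H = generate H (\<Union>{N. minimal_normal H N})"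

definition two_transitive :: "'a set \<Rightarrow> ('a \<Rightarrow> 'a) set \<Rightarrow> bool" where
  "two_transitive S G \<longleftrightarrow> (\<forall>a\<in>S. \<forall>b\<in>S. \<forall>c\<in>S. \<forall>d\<in>S.
     a \<noteq> b \<longrightarrow> c \<noteq> d \<longrightarrow> (\<exists>f\<in>G. f a = c \<and> f b = d))"

definition prod_elem :: "'a set \<Rightarrow> ('a \<Rightarrow> 'a) \<Rightarrow> ('a \<Rightarrow> 'a) \<Rightarrow> ('a \<times> 'a \<Rightarrow> 'a \<times> 'a)" where
  "prod_elem D f g = restrict (\<lambda>(x, y). (f x, g y)) (D \<times> D)"

(* (f,g) composed with the coordinate swap \<tau>(x,y) = (y,x) *)
definition swap_elem :: "'a set \<Rightarrow> ('a \<Rightarrow> 'a) \<Rightarrow> ('a \<Rightarrow> 'a) \<Rightarrow> ('a \<times> 'a \<Rightarrow> 'a \<times> 'a)" where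
  "swap_elem D f g = restrict (\<lambda>(x, y). (f y, g x)) (D \<times> D)"

definition base_group :: "'a set \<Rightarrow> ('a \<Rightarrow> 'a) set \<Rightarrow> ('a \<times> 'a \<Rightarrow> 'a \<times> 'a) set" where
  "base_group D K = {prod_elem D f g | f g. f \<in> K \<and> g \<in> K}"

(* K wr Z_2 in product action on D \<times> D *)
definition wreath_product_action :: "'a set \<Rightarrow> ('a \<Rightarrow> 'a) set \<Rightarrow> ('a \<times> 'a \<Rightarrow> 'a \<times> 'a) set" where
  "wreath_product_action D K = base_group D K \<union> {swap_elem D f g | f g. f \<in> K \<and> g \<in> K}"

definition perm_rank :: "'a set \<Rightarrow> ('a \<Rightarrow> 'a) set \<Rightarrow> nat" where
  "perm_rank S G = card ((\<lambda>(p, q). {(g p, g q) | g. g \<in> G}) ` (S \<times> S))"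

definition design2 :: "'p set \<Rightarrow> 'p set set \<Rightarrow> nat \<Rightarrow> nat \<Rightarrow> bool" where
  "design2 \<Omega> \<B> k lam \<longleftrightarrow> finite \<Omega> \<and> 0 < lam \<and> 2 < k \<and> k < card \<Omega> \<and>
     (\<forall>B\<in>\<B>. B \<subseteq> \<Omega> \<and> card B = k) \<and>
     (\<forall>p\<in>\<Omega>. \<forall>q\<in>\<Omega>. p \<noteq> q \<longrightarrow> card {B\<in>\<B>. p \<in> B \<and> q \<in> B} = lam)"

definition automorphisms_of :: "'p set set \<Rightarrow> ('p \<Rightarrow> 'p) set \<Rightarrow> bool" where
  "automorphisms_of \<B> G \<longleftrightarrow> (\<forall>g\<in>G. \<forall>B\<in>\<B>. g ` B \<in> \<B>)"

definition flag_transitive :: "'p set set \<Rightarrow> ('p \<Rightarrow> 'p) set \<Rightarrow> bool" where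
  "flag_transitive \<B> G \<longleftrightarrow> (\<forall>p B q C. B \<in> \<B> \<longrightarrow> p \<in> B \<longrightarrow> C \<in> \<B> \<longrightarrow> q \<in> C \<longrightarrow>
     (\<exists>g\<in>G. g p = q \<and> g ` B = C))"

end

theory Submission
  imports Defs Complex_Main
begin

lemma dc:
  assumes "finite X" "finite B"
  shows "(\<Sum>C\<in>X. card (F C \<inter> B)) = (\<Sum>q\<in>B. card {C\<in>X. q \<in> F C})"
proof -
  have "(\<Sum>C\<in>X. card (F C \<inter> B)) = (\<Sum>C\<in>X. \<Sum>q\<in>B. if q \<in> F C then 1 else 0)"
  proof (rule sum.cong[OF refl])
    fix C assume "C \<in> X"
    have "F C \<inter> B = {q\<in>B. q \<in> F C}" by auto
    have "(\<Sum>q\<in>B. if q \<in> F C then 1 else 0) = (\<Sum>q\<in>{q\<in>B. q \<in> F C}. (1::nat))"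
      by (rule sum.inter_filter[symmetric]) (rule assms(2))
    then show "card (F C \<inter> B) = (\<Sum>q\<in>B. if q \<in> F C then 1 else 0)"
      using \<open>F C \<inter> B = {q\<in>B. q \<in> F C}\<close> by simp
  qed
  also have "\<dots> = (\<Sum>q\<in>B. \<Sum>C\<in>X. if q \<in> F C then 1 else 0)"
    by (rule sum.swap)
  also have "\<dots> = (\<Sum>q\<in>B. card {C\<in>X. q \<in> F C})"
  proof (rule sum.cong[OF refl])
    fix q
    have "(\<Sum>C\<in>X. if q \<in> F C then 1 else 0) = (\<Sum>C\<in>{C\<in>X. q \<in> F C}. (1::nat))"
      by (rule sum.inter_filter[symmetric]) (rule assms(1))
    then show "(\<Sum>C\<in>X. if q \<in> F C then 1 else 0) = card {C\<in>X. q \<in> F C}" by simp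
  qed
  finally show ?thesis .
qed

lemma cs:
  fixes f :: "'a \<Rightarrow> real"
  assumes "finite I"
  shows "(\<Sum>i\<in>I. f i)\<^sup>2 \<le> real (card I) * (\<Sum>i\<in>I. (f i)\<^sup>2)"
proof (cases "I = {}")
  case True then show ?thesis by simp
next
  case False
  define n where "n = real (card I)"
  define s where "s = (\<Sum>i\<in>I. f i)"
  have n: "n > 0" using False assms by (simp add: n_def card_gt_0_iff)
  have "0 \<le> (\<Sum>i\<in>I. (n * f i - s)\<^sup>2)" by (simp add: sum_nonneg)
  also have "\<dots> = n^2 * (\<Sum>i\<in>I. (f i)\<^sup>2) - 2 * n * s * s + n * s^2"
    by (simp add: power2_eq_square algebra_simps sum.distrib sum_subtractf sum_distrib_left sum_distrib_right
        n_def s_def)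
  finally have "0 \<le> n * (n * (\<Sum>i\<in>I. (f i)\<^sup>2) - s^2)"
    by (simp add: power2_eq_square algebra_simps)
  then have "0 \<le> n * (\<Sum>i\<in>I. (f i)\<^sup>2) - s^2" using n by (simp add: zero_le_mult_iff)
  then show ?thesis by (simp add: n_def s_def)
qed

lemma fisher_arith:
  fixes R K V L Bn :: real
  assumes bk: "Bn * K = V * R" and lv: "L * (V - 1) = R * (K - 1)"
    and csi: "(K * (R - 1))\<^sup>2 \<le> (Bn - 1) * (K * (R - 1) + K * (K - 1) * (L - 1))"
    and VK: "V > K" and K: "K > 2" and R: "R > 0"
  shows "R \<ge> K"
proof -
  define E where "E = (K - 1) * L + R - K"
  have S: "K * (R - 1) + K * (K - 1) * (L - 1) = K * E" by (simp add: E_def algebra_simps)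
  have h1: "(Bn - 1) * (K * E) = (V * R - K) * E"
    using bk by (simp add: algebra_simps)
  have h2: "(V - 1) * E = R * (K - 1)^2 + (R - K) * (V - 1)"
  proof -
    have "(V - 1) * E = (K - 1) * (L * (V - 1)) + (R - K) * (V - 1)"
      by (simp add: E_def algebra_simps)
    also have "\<dots> = R * (K - 1)^2 + (R - K) * (V - 1)" using lv by (simp add: power2_eq_square)
    finally show ?thesis .
  qed
  have "(V - 1) * ((Bn - 1) * (K * E) - (K * (R - 1))\<^sup>2)
      = (V - 1) * ((V * R - K) * E - (K * (R - 1))\<^sup>2)"
    by (simp only: h1)
  also have "\<dots> = (V * R - K) * ((V - 1) * E) - (V - 1) * (K * (R - 1))\<^sup>2"
    by (simp add: algebra_simps)
  also have "\<dots> = R * (R - K) * (V - K)^2"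
    unfolding h2 by (simp add: power2_eq_square algebra_simps)
  finally have eq: "(V - 1) * ((Bn - 1) * (K * E) - (K * (R - 1))\<^sup>2) = R * (R - K) * (V - K)^2" .
  have "0 \<le> (V - 1) * ((Bn - 1) * (K * E) - (K * (R - 1))\<^sup>2)"
    using csi S VK K by (intro mult_nonneg_nonneg) auto
  then have "0 \<le> R * ((R - K) * (V - K)^2)" using eq by (simp add: mult.assoc)
  then have "0 \<le> (R - K) * (V - K)^2" using R by (simp add: zero_le_mult_iff)
  moreover have "(V - K)^2 > 0" using VK by simp
  ultimately have "0 \<le> R - K" by (simp add: zero_le_mult_iff)
  then show ?thesis by simp
qed

lemma ww: "(w::nat) \<ge> 1 \<Longrightarrow> 2 * (w * w - 1) = (w + 1) * (2 * (w - 1))"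
  by (cases w) (simp_all add: algebra_simps)

lemma final_arith:
  fixes r lam x k w :: nat
  assumes hb: "r * x = lam * (2 * (w - 1))"
    and ha: "r * (k - 1) = lam * (w * w - 1)"
    and hc: "k \<le> r" and hd: "(gcd r lam)^2 \<le> lam"
    and w: "w \<ge> 5" and lam: "lam > 0" and k: "k > 2"
  shows "lam div gcd r lam = x"
proof -
  define g where "g = gcd r lam"
  have g0: "g > 0" using lam by (simp add: g_def)
  obtain r' l' where rr: "r = r' * g" and ll: "lam = l' * g" and cop: "coprime r' l'"
    using gcd_coprime_exists[of r lam] g0 unfolding g_def by auto
  have r'0: "r' > 0" using rr hc k by (cases "r' = 0") auto
  have l'0: "l' > 0" using ll lam by (cases "l' = 0") auto
  have "g * (r' * x) = g * (l' * (2 * (w - 1)))"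
    using hb unfolding rr ll by (simp only: ac_simps)
  then have b1: "r' * x = l' * (2 * (w - 1))"
    using g0 by simp
  have "r' dvd l' * (2 * (w - 1))" using b1 by (metis dvd_triv_left)
  then have "r' dvd 2 * (w - 1)" using cop by (simp add: coprime_dvd_mult_right_iff)
  then obtain m where m: "2 * (w - 1) = r' * m" by auto
  have xm: "x = l' * m"
  proof -
    have "r' * x = l' * (r' * m)" using b1 unfolding m .
    then have "r' * x = r' * (l' * m)" by (simp only: ac_simps)
    then show ?thesis using r'0 by simp
  qed
  have m0: "m > 0" using m w by (cases "m = 0") auto
  have "g * (r' * (k - 1)) = g * (l' * (w * w - 1))"
    using ha unfolding rr ll by (simp only: ac_simps)
  then have a1: "r' * (k - 1) = l' * (w * w - 1)"
    using g0 by simp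
  have ww: "2 * (w * w - 1) = (w + 1) * (2 * (w - 1))" using w ww[of w] by simp
  have "r' * (2 * (k - 1)) = r' * (l' * m * (w + 1))"
  proof -
    have "r' * (2 * (k - 1)) = l' * (2 * (w * w - 1))" using a1 by (simp add: algebra_simps)
    also have "\<dots> = l' * (w + 1) * (r' * m)" unfolding ww m by (simp add: algebra_simps)
    finally show ?thesis by (simp add: algebra_simps)
  qed
  then have a2: "2 * (k - 1) = l' * m * (w + 1)" using r'0 by simp
  have gl: "g \<le> l'"
  proof -
    have "g * g \<le> lam" using hd unfolding g_def power2_eq_square .
    then have "g * g \<le> l' * g" using ll by simp
    then show ?thesis using g0 by simp
  qed
  show ?thesis
  proof (cases "m = 1")
    case True
    have e1: "lam div gcd r lam = lam div g" unfolding g_def ..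
    have "lam div g = l'" using ll g0 by simp
    then show ?thesis using xm True e1 by simp
  next
    case False
    then have m2: "m \<ge> 2" using m0 by simp
    have "m * k \<le> m * r" using hc by simp
    also have "\<dots> = g * (2 * (w - 1))" using rr m by (simp add: algebra_simps)
    finally have i1: "m * k \<le> g * (2 * (w - 1))" .
    have k2: "2 * k = l' * m * (w + 1) + 2" using a2 k by simp
    have "g * m * (w + 1) \<le> l' * m * (w + 1)" using gl by (intro mult_le_mono1)
    then have t1: "g * m * (w + 1) \<le> 2 * k" using k2 by linarith
    have t2: "m * (g * m * (w + 1)) \<le> m * (2 * k)" using t1 by (rule mult_le_mono2)
    have t3: "2 * (g * 2 * (w + 1)) \<le> m * (g * m * (w + 1))"
    proof -
      have "2 * 2 \<le> m * m" using m2 mult_le_mono by blast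
      then have "(2 * 2) * (g * (w + 1)) \<le> (m * m) * (g * (w + 1))" by (rule mult_le_mono1)
      then show ?thesis by (simp only: ac_simps)
    qed
    have t4: "m * (2 * k) = 2 * (m * k)" by (simp only: ac_simps)
    have "2 * (g * 2 * (w + 1)) \<le> 2 * (g * (2 * (w - 1)))" using t2 t3 t4 i1 by linarith
    then have "g * (w + 1) \<le> g * (w - 1)" by simp
    then have "w + 1 \<le> w - 1" using g0 mult_le_cancel1[of g "w + 1" "w - 1"] by blast
    then show ?thesis using w by simp
  qed
qed

theorem lemma2p3:
  fixes \<Delta> :: "'a set" and \<B> :: "('a \<times> 'a) set set"
    and k lam r :: nat
    and G :: "('a \<times> 'a \<Rightarrow> 'a \<times> 'a) set"
    and T0 T :: "('a \<Rightarrow> 'a) set"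
  assumes "finite \<Delta>" and "card \<Delta> \<ge> 5" and "odd (card \<Delta>)"
    and des: "design2 (\<Delta> \<times> \<Delta>) \<B> k lam"
    and repl: "\<forall>p\<in>\<Delta> \<times> \<Delta>. card {B\<in>\<B>. p \<in> B} = r"
    and "lam \<ge> (gcd r lam)^2"
    and "subgroup T0 (BijGroup \<Delta>)"
    and "two_transitive \<Delta> T0"
    and "socle (pgrp \<Delta> T0) = T"
    and "simple_group (pgrp \<Delta> T)"
    and "\<not> comm_group (pgrp \<Delta> T)"
    and "subgroup G (BijGroup (\<Delta> \<times> \<Delta>))"
    and "G \<subseteq> wreath_product_action \<Delta> T0"
    and "base_group \<Delta> T \<lhd> pgrp (\<Delta> \<times> \<Delta>) G"
    and "automorphisms_of \<B> G"
    and "flag_transitive \<B> G"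
    and "perm_rank (\<Delta> \<times> \<Delta>) G = 3"
    and "B \<in> \<B>" and "(\<alpha>, \<beta>) \<in> B"
  shows "int (lam div gcd r lam) =
           int (card {x\<in>B. fst x = \<alpha>}) + int (card {x\<in>B. snd x = \<beta>}) - 2"
  proof -
  define \<Omega> where "\<Omega> = \<Delta> \<times> \<Delta>"
  define w where "w = card \<Delta>"
  define p where "p = (\<alpha>, \<beta>)"
  from des have finO: "finite \<Omega>" and lam0: "0 < lam" and k2: "2 < k" and kv: "k < card \<Omega>"
    and blk: "\<And>C. C \<in> \<B> \<Longrightarrow> C \<subseteq> \<Omega> \<and> card C = k"
    unfolding design2_def \<Omega>_def by auto
  have pair: "\<And>q q'. q \<in> \<Omega> \<Longrightarrow> q' \<in> \<Omega> \<Longrightarrow> q \<noteq> q' \<Longrightarrow> card {C\<in>\<B>. q \<in> C \<and> q' \<in> C} = lam"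
  proof -
    fix q q' assume "q \<in> \<Omega>" "q' \<in> \<Omega>" "q \<noteq> q'"
    moreover have "\<forall>p\<in>\<Omega>. \<forall>q\<in>\<Omega>. p \<noteq> q \<longrightarrow> card {B\<in>\<B>. p \<in> B \<and> q \<in> B} = lam"
      using des unfolding design2_def \<Omega>_def by (elim conjE)
    ultimately show "card {C\<in>\<B>. q \<in> C \<and> q' \<in> C} = lam" by simp
  qed
  have v: "card \<Omega> = w * w" unfolding \<Omega>_def w_def by (simp add: card_cartesian_product)
  have "\<B> \<subseteq> Pow \<Omega>" using blk by auto
  then have finB: "finite \<B>" using finite_subset[of \<B> "Pow \<Omega>"] finO by simp
  have rep: "\<And>q. q \<in> \<Omega> \<Longrightarrow> card {C\<in>\<B>. q \<in> C} = r" using repl unfolding \<Omega>_def by auto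
  have BB: "B \<in> \<B>" and pB: "p \<in> B" using assms(18,19) p_def by auto
  have pO: "p \<in> \<Omega>" using blk[OF BB] pB by auto
  then have al: "\<alpha> \<in> \<Delta>" and be: "\<beta> \<in> \<Delta>" unfolding \<Omega>_def p_def by auto
  have w5: "w \<ge> 5" using assms(2) w_def by simp
  have L1: "(\<Sum>C\<in>{C\<in>\<B>. q \<in> C}. card (C \<inter> S)) = lam * card S"
    if q: "q \<in> \<Omega>" and S: "S \<subseteq> \<Omega> - {q}" for q S
  proof -
    have finS: "finite S" using finO S finite_subset by blast
    have fin2: "finite {C\<in>\<B>. q \<in> C}" using finB by simp
    have "(\<Sum>C\<in>{C\<in>\<B>. q \<in> C}. card (C \<inter> S)) = (\<Sum>q'\<in>S. card {C\<in>{C\<in>\<B>. q \<in> C}. q' \<in> C})"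
      using dc[OF fin2 finS, of "\<lambda>C. C"] by simp
    also have "\<dots> = (\<Sum>q'\<in>S. lam)"
    proof (rule sum.cong[OF refl])
      fix q' assume q': "q' \<in> S"
      have "{C\<in>{C\<in>\<B>. q \<in> C}. q' \<in> C} = {C\<in>\<B>. q \<in> C \<and> q' \<in> C}" by auto
      moreover have "q' \<in> \<Omega>" "q \<noteq> q'" using q' S by auto
      ultimately show "card {C\<in>{C\<in>\<B>. q \<in> C}. q' \<in> C} = lam" using pair[OF q, of q'] by simp
    qed
    finally show ?thesis by simp
  qed
  have Bp: "card {C\<in>\<B>. p \<in> C} = r" using rep pO by simp
  have finBp: "finite {C\<in>\<B>. p \<in> C}" using finB by simp
  have r1: "r \<ge> 1"
  proof -
    have "{C\<in>\<B>. p \<in> C} \<noteq> {}" using BB pB by auto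
    then show ?thesis using Bp finBp by (metis card_0_eq less_one not_less)
  qed
  have ha0: "r * (k - 1) = lam * (card \<Omega> - 1)"
  proof -
    have "(\<Sum>C\<in>{C\<in>\<B>. p \<in> C}. card (C \<inter> (\<Omega> - {p}))) = lam * card (\<Omega> - {p})"
      using L1[OF pO] by simp
    moreover have "(\<Sum>C\<in>{C\<in>\<B>. p \<in> C}. card (C \<inter> (\<Omega> - {p}))) = (\<Sum>C\<in>{C\<in>\<B>. p \<in> C}. k - 1)"
    proof (rule sum.cong[OF refl])
      fix C assume C: "C \<in> {C\<in>\<B>. p \<in> C}"
      then have "C \<inter> (\<Omega> - {p}) = C - {p}" using blk by auto
      then show "card (C \<inter> (\<Omega> - {p})) = k - 1" using C blk by auto
    qed
    moreover have "card (\<Omega> - {p}) = card \<Omega> - 1" using pO finO by simp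
    ultimately show ?thesis using Bp by simp
  qed
  have ha: "r * (k - 1) = lam * (w * w - 1)" using ha0 v by simp
  define S1 where "S1 = {q\<in>\<Omega>. q \<noteq> p \<and> (fst q = \<alpha> \<or> snd q = \<beta>)}"
  have S1eq: "S1 = ({\<alpha>} \<times> (\<Delta> - {\<beta>})) \<union> ((\<Delta> - {\<alpha>}) \<times> {\<beta>})"
    unfolding S1_def \<Omega>_def p_def using al be by auto
  have cardS1: "card S1 = 2 * (w - 1)"
  proof -
    have "card ({\<alpha>} \<times> (\<Delta> - {\<beta>})) = w - 1" using be assms(1) w_def by (simp add: card_cartesian_product)
    moreover have "card ((\<Delta> - {\<alpha>}) \<times> {\<beta>}) = w - 1" using al assms(1) w_def by (simp add: card_cartesian_product)
    moreover have "({\<alpha>} \<times> (\<Delta> - {\<beta>})) \<inter> ((\<Delta> - {\<alpha>}) \<times> {\<beta>}) = {}" by auto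
    ultimately show ?thesis unfolding S1eq using assms(1)
      by (subst card_Un_disjoint) auto
  qed
  have GB: "G \<subseteq> Bij \<Omega>" using subgroup.subset[OF assms(12)] unfolding \<Omega>_def by (simp add: BijGroup_def)
  have hinv: "card (C1 \<inter> S1) \<le> card (C2 \<inter> S1)"
    if C1: "C1 \<in> \<B>" "p \<in> C1" and C2: "C2 \<in> \<B>" "p \<in> C2" for C1 C2
  proof -
    obtain g where g: "g \<in> G" "g p = p" "g ` C1 = C2"
      using assms(16) C1 C2 unfolding flag_transitive_def by blast
    have bij: "bij_betw g \<Omega> \<Omega>" using GB g(1) by (auto simp: Bij_def)
    then have inj: "inj_on g \<Omega>" and img: "g ` \<Omega> = \<Omega>" by (auto simp: bij_betw_def)
    have gW: "g \<in> wreath_product_action \<Delta> T0" using g(1) assms(13) by blast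
    have pres: "g q \<in> S1" if q: "q \<in> S1" for q
    proof -
      have qO: "q \<in> \<Omega>" and qp: "q \<noteq> p" and qc: "fst q = \<alpha> \<or> snd q = \<beta>" using q unfolding S1_def by auto
      have "g q \<in> \<Omega>" using img qO by auto
      moreover have "g q \<noteq> p" using inj qO pO qp g(2) by (metis inj_on_def)
      moreover have "fst (g q) = \<alpha> \<or> snd (g q) = \<beta>"
      proof -
        obtain a b where ab: "q = (a, b)" "a \<in> \<Delta>" "b \<in> \<Delta>" using qO unfolding \<Omega>_def by auto
        from gW consider (P) f h where "g = prod_elem \<Delta> f h" | (W) f h where "g = swap_elem \<Delta> f h"
          unfolding wreath_product_action_def base_group_def by blast
        then show ?thesis
        proof cases
          case P
          then have "(f \<alpha>, h \<beta>) = (\<alpha>, \<beta>)" using g(2) al be unfolding p_def prod_elem_def by simp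
          then show ?thesis using P ab qc unfolding prod_elem_def by auto
        next
          case W
          then have "(f \<beta>, h \<alpha>) = (\<alpha>, \<beta>)" using g(2) al be unfolding p_def swap_elem_def by simp
          then show ?thesis using W ab qc unfolding swap_elem_def by auto
        qed
      qed
      ultimately show ?thesis unfolding S1_def by auto
    qed
    have sub: "g ` (C1 \<inter> S1) \<subseteq> C2 \<inter> S1" using g(3) pres by auto
    have "C1 \<inter> S1 \<subseteq> \<Omega>" using blk C1 by auto
    then have "card (g ` (C1 \<inter> S1)) = card (C1 \<inter> S1)" using inj by (meson card_image inj_on_subset)
    moreover have "finite (C2 \<inter> S1)" using finO blk C2 finite_subset by blast
    ultimately show ?thesis using sub by (metis card_mono)
  qed
  define x where "x = card (B \<inter> S1)"
  have hb: "r * x = lam * (2 * (w - 1))"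
  proof -
    have "S1 \<subseteq> \<Omega> - {p}" unfolding S1_def by auto
    then have "(\<Sum>C\<in>{C\<in>\<B>. p \<in> C}. card (C \<inter> S1)) = lam * (2 * (w - 1))"
      using L1[OF pO] cardS1 by simp
    moreover have "(\<Sum>C\<in>{C\<in>\<B>. p \<in> C}. card (C \<inter> S1)) = (\<Sum>C\<in>{C\<in>\<B>. p \<in> C}. x)"
    proof (rule sum.cong[OF refl])
      fix C assume "C \<in> {C\<in>\<B>. p \<in> C}"
      then show "card (C \<inter> S1) = x" unfolding x_def using hinv BB pB by (simp add: le_antisym)
    qed
    ultimately show ?thesis using Bp by simp
  qed
  define b where "b = card \<B>"
  define X where "X = \<B> - {B}"
  have finX: "finite X" using finB X_def by simp
  have finBl: "finite B" using blk[OF BB] finO finite_subset by blast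
  have cardB: "card B = k" using blk[OF BB] by simp
  have cX: "card X = b - 1" unfolding X_def b_def using BB finB by simp
  have b1: "b \<ge> 1" unfolding b_def using BB finB by (metis One_nat_def Suc_leI card_gt_0_iff empty_iff)
  have bk: "b * k = card \<Omega> * r"
  proof -
    have "(\<Sum>C\<in>\<B>. card (C \<inter> \<Omega>)) = (\<Sum>q\<in>\<Omega>. card {C\<in>\<B>. q \<in> C})"
      using dc[OF finB finO, of "\<lambda>C. C"] by simp
    also have "\<dots> = (\<Sum>q\<in>\<Omega>. r)" using rep by simp
    finally have e: "(\<Sum>C\<in>\<B>. card (C \<inter> \<Omega>)) = card \<Omega> * r" by simp
    have "(\<Sum>C\<in>\<B>. card (C \<inter> \<Omega>)) = (\<Sum>C\<in>\<B>. k)"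
    proof (rule sum.cong[OF refl])
      fix C assume "C \<in> \<B>" then show "card (C \<inter> \<Omega>) = k" using blk by (metis Int_absorb2)
    qed
    then show ?thesis using e b_def by simp
  qed
  have rm1: "card {C\<in>X. q \<in> C} = r - 1" if q: "q \<in> B" for q
  proof -
    have "{C\<in>X. q \<in> C} = {C\<in>\<B>. q \<in> C} - {B}" unfolding X_def by auto
    moreover have "q \<in> \<Omega>" using q blk[OF BB] by auto
    ultimately show ?thesis using rep q BB finB by simp
  qed
  have lm1: "card {C\<in>X. q \<in> C \<and> q' \<in> C} = lam - 1" if q: "q \<in> B" "q' \<in> B" "q \<noteq> q'" for q q'
  proof -
    have "{C\<in>X. q \<in> C \<and> q' \<in> C} = {C\<in>\<B>. q \<in> C \<and> q' \<in> C} - {B}" unfolding X_def by auto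
    moreover have "q \<in> \<Omega>" "q' \<in> \<Omega>" using q blk[OF BB] by auto
    ultimately show ?thesis using pair q BB finB by simp
  qed
  have s1: "(\<Sum>C\<in>X. card (C \<inter> B)) = k * (r - 1)"
  proof -
    have "(\<Sum>C\<in>X. card (C \<inter> B)) = (\<Sum>q\<in>B. card {C\<in>X. q \<in> C})"
      using dc[OF finX finBl, of "\<lambda>C. C"] by simp
    also have "\<dots> = (\<Sum>q\<in>B. r - 1)" using rm1 by simp
    finally show ?thesis using cardB by simp
  qed
  have s2: "(\<Sum>C\<in>X. (card (C \<inter> B))^2) = k * ((r - 1) + (k - 1) * (lam - 1))"
  proof -
    have "(\<Sum>C\<in>X. (card (C \<inter> B))^2) = (\<Sum>C\<in>X. card ((C \<times> C) \<inter> (B \<times> B)))"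
    proof (rule sum.cong[OF refl])
      fix C
      have "(C \<times> C) \<inter> (B \<times> B) = (C \<inter> B) \<times> (C \<inter> B)" by auto
      then show "(card (C \<inter> B))^2 = card ((C \<times> C) \<inter> (B \<times> B))"
        by (simp add: card_cartesian_product power2_eq_square)
    qed
    also have "\<dots> = (\<Sum>z\<in>B \<times> B. card {C\<in>X. z \<in> C \<times> C})"
      using dc[OF finX, of "B \<times> B" "\<lambda>C. C \<times> C"] finBl by simp
    also have "\<dots> = (\<Sum>q\<in>B. \<Sum>q'\<in>B. card {C\<in>X. q \<in> C \<and> q' \<in> C})"
      by (simp add: sum.cartesian_product split_def mem_Times_iff)
    also have "\<dots> = (\<Sum>q\<in>B. (r - 1) + (k - 1) * (lam - 1))"
    proof (rule sum.cong[OF refl])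
      fix q assume q: "q \<in> B"
      have "(\<Sum>q'\<in>B. card {C\<in>X. q \<in> C \<and> q' \<in> C})
          = card {C\<in>X. q \<in> C \<and> q \<in> C} + (\<Sum>q'\<in>B - {q}. card {C\<in>X. q \<in> C \<and> q' \<in> C})"
        using finBl q by (simp add: sum.remove)
      also have "\<dots> = (r - 1) + (\<Sum>q'\<in>B - {q}. lam - 1)"
      proof -
        have "(\<Sum>q'\<in>B - {q}. card {C\<in>X. q \<in> C \<and> q' \<in> C}) = (\<Sum>q'\<in>B - {q}. lam - 1)"
          by (rule sum.cong[OF refl]) (use lm1[OF q] in auto)
        then show ?thesis using rm1[OF q] by simp
      qed
      also have "\<dots> = (r - 1) + (k - 1) * (lam - 1)" using cardB finBl q by simp
      finally show "(\<Sum>q'\<in>B. card {C\<in>X. q \<in> C \<and> q' \<in> C}) = (r - 1) + (k - 1) * (lam - 1)" .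
    qed
    finally show ?thesis using cardB by simp
  qed
  have hc: "k \<le> r"
  proof -
    define f where "f = (\<lambda>C. real (card (C \<inter> B)))"
    have csi0: "(\<Sum>C\<in>X. f C)\<^sup>2 \<le> real (card X) * (\<Sum>C\<in>X. (f C)\<^sup>2)" using cs[OF finX] .
    have e1: "(\<Sum>C\<in>X. f C) = real k * (real r - 1)"
      unfolding f_def using s1 r1 by (simp flip: of_nat_sum add: of_nat_diff)
    have e2: "(\<Sum>C\<in>X. (f C)\<^sup>2) = real k * ((real r - 1) + (real k - 1) * (real lam - 1))"
    proof -
      have "(\<Sum>C\<in>X. (f C)\<^sup>2) = real (\<Sum>C\<in>X. (card (C \<inter> B))^2)"
        unfolding f_def by (simp add: of_nat_sum)
      also have "\<dots> = real (k * ((r - 1) + (k - 1) * (lam - 1)))" using s2 by simp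
      also have "\<dots> = real k * ((real r - 1) + (real k - 1) * (real lam - 1))"
        using r1 k2 lam0 by (simp add: of_nat_diff)
      finally show ?thesis .
    qed
    have e3: "real (card X) = real b - 1" using cX b1 by (simp add: of_nat_diff)
    have csi: "(real k * (real r - 1))\<^sup>2 \<le> (real b - 1) * (real k * (real r - 1) + real k * (real k - 1) * (real lam - 1))"
      using csi0 unfolding e1 e2 e3 by (simp add: algebra_simps)
    have bk': "real b * real k = real (card \<Omega>) * real r" using bk by (metis of_nat_mult)
    have lv: "real lam * (real (card \<Omega>) - 1) = real r * (real k - 1)"
    proof -
      have "card \<Omega> \<ge> 1" using kv by simp
      then have d1: "real (card \<Omega> - 1) = real (card \<Omega>) - 1" by (simp add: of_nat_diff)
      have d2: "real (k - 1) = real k - 1" using k2 by (simp add: of_nat_diff)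
      have "real r * real (k - 1) = real lam * real (card \<Omega> - 1)" using ha0 by (metis of_nat_mult)
      then show ?thesis unfolding d1 d2 by (rule sym)
    qed
    have "real k \<le> real r"
      by (rule fisher_arith[OF bk' lv csi]) (use kv k2 r1 in auto)
    then show ?thesis by simp
  qed
  have main: "lam div gcd r lam = x"
    by (rule final_arith[OF hb ha hc assms(6) w5 lam0 k2])
  define Cc where "Cc = {y\<in>B. fst y = \<alpha>}"
  define Dd where "Dd = {y\<in>B. snd y = \<beta>}"
  have "B \<inter> S1 = (Cc - {p}) \<union> (Dd - {p})"
    unfolding S1_def Cc_def Dd_def using blk[OF BB] by auto
  moreover have "(Cc - {p}) \<inter> (Dd - {p}) = {}" unfolding Cc_def Dd_def p_def by auto
  moreover have fC: "finite Cc" "finite Dd" using finBl unfolding Cc_def Dd_def by auto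
  ultimately have "x = card (Cc - {p}) + card (Dd - {p})"
    unfolding x_def by (simp add: card_Un_disjoint)
  moreover have "p \<in> Cc" "p \<in> Dd" using pB unfolding Cc_def Dd_def p_def by auto
  ultimately have "x = (card Cc - 1) + (card Dd - 1)" "card Cc \<ge> 1" "card Dd \<ge> 1"
    using fC by (auto simp: card_gt_0_iff Suc_le_eq)
  then show ?thesis using main unfolding Cc_def Dd_def by simp
qed

end
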